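(* Let $\mathcal{X}$ be a finite set of actions, $\mathcal{Y}$ a finite set of responses, $\mathcal{H}\subseteq\mathcal{Y}^{\mathcal{X}}$, $\mathrm{cost}:\mathcal{X}\times\mathcal{Y}\to\mathbb{R}_+$. Let $f:2^{\mathcal{X}\times\mathcal{Y}}\to\mathbb{R}_+$, $Q>0$, $\eta>0$ be such that $f$ is monotone non-decreasing and submodular, $f(\emptyset)=0$, for every $S$, $f(S)\ge Q-\eta$ implies $f(S)\ge Q$, and $f$ is consistency-aware for $Q$. Let $\mathcal{A}$ be an interactive algorithm that obtains $f(S)\ge Q$ at termination (i.e. $f(S^h[\mathcal{A}])\ge Q$ for all $h\in\mathcal{H}$). Let $\gamma=r_{\mathrm{cost}}$ if $\mathcal{A}$ is bifurcating, and $\gamma=R_{\mathrm{cost}}$ otherwise. Then there exists $x\in\mathcal{X}$ such that $$u^f(x,\emptyset)\ge \frac{Q}{\gamma\cdot\mathrm{cost}(\mathcal{A})}.$$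
   Context: The true state is an unknown $h^*\in\mathcal{H}$. An interactive algorithm $\mathcal{A}$, given the set $S\subseteq\mathcal{X}\times\mathcal{Y}$ of pairs observed so far, outputs either an action $\mathcal{A}(S)\in\mathcal{X}$ (yielding the pair $(x,h^*(x))$, which is added to $S$) or terminates. $S^h_t[\mathcal{A}]$ / $S^h[\mathcal{A}]$ denote the pairs collected in the first $t$ iterations / until termination when $h^*=h$. $\mathrm{cost}(S)=\sum_{(x,y)\in S}\mathrm{cost}(x,y)$, $\mathrm{cost}(\mathcal{A})=\max_{h\in\mathcal{H}}\mathrm{cost}(S^h[\mathcal{A}])$. Version space $V(S)=\{h\in\mathcal{H}\mid\forall(x,y)\in S,\ y=h(x)\}$; $\mathcal{Y}(x,S)=\{h(x)\mid h\in V(S)\}$. $\mathcal{A}$ is bifurcating if for all $t$ and $h\in\mathcal{H}$ (at which $\mathcal{A}$ selects an action), $|\mathcal{Y}(\mathcal{A}(S^h_t[\mathcal{A}]),S^h_t[\mathcal{A}])|\ge 2$. $f$ is consistency-aware for $Q$ if $f(S)\ge Q$ for all $S$ with $V(S)=\emptyset$. $\delta_g(z\mid A)=g(A\cup\{z\})-g(A)$; $u^f(x,S)=\min_{h\in V(S)}\frac{\delta_{\min(f,Q)}((x,h(x))\mid S)}{\mathrm{cost}(x,h(x))}$. Cost ratio: $R_{\mathrm{cost}}=\max_{x\in\mathcal{X}}\frac{\max_{y}\mathrm{cost}(x,y)}{\min_y\mathrm{cost}(x,y)}$. Second-smallest cost ratio: $\phi(x)$ is the second-smallest value in the multiset $\{\mathrm{cost}(x,y)\mid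 y\in\mathcal{Y}\}$ and $r_{\mathrm{cost}}=\max_{x,y}\frac{\mathrm{cost}(x,y)}{\phi(x)}$. *)

theory Defs
  imports Complex_Main "HOL-Library.Multiset"
begin

type_synonym ('x, 'y) alg = "('x \<times> 'y) set \<Rightarrow> 'x option"
  (* Some x = select action x;  None = terminate *)

definition costS :: "('x \<Rightarrow> 'y \<Rightarrow> real) \<Rightarrow> ('x \<times> 'y) set \<Rightarrow> real" where
  "costS cost S = (\<Sum>(x,y)\<in>S. cost x y)"

definition vs :: "('x \<Rightarrow> 'y) set \<Rightarrow> ('x \<times> 'y) set \<Rightarrow> ('x \<Rightarrow> 'y) set" where
  "vs H S = {h \<in> H. \<forall>(x,y)\<in>S. y = h x}"

definition resp :: "('x \<Rightarrow> 'y) set \<Rightarrow> 'x \<Rightarrow> ('x \<times> 'y) set \<Rightarrow> 'y set" where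
  "resp H x S = {h x | h. h \<in> vs H S}"

primrec run :: "('x, 'y) alg \<Rightarrow> ('x \<Rightarrow> 'y) \<Rightarrow> nat \<Rightarrow> ('x \<times> 'y) set" where
  "run A h 0 = {}"
| "run A h (Suc t) = (case A (run A h t) of None \<Rightarrow> run A h t
                        | Some x \<Rightarrow> insert (x, h x) (run A h t))"

definition terminates :: "('x, 'y) alg \<Rightarrow> ('x \<Rightarrow> 'y) \<Rightarrow> bool" where
  "terminates A h = (\<exists>t. A (run A h t) = None)"

definition final :: "('x, 'y) alg \<Rightarrow> ('x \<Rightarrow> 'y) \<Rightarrow> ('x \<times> 'y) set" where
  "final A h = run A h (LEAST t. A (run A h t) = None)"

definition costA :: "('x \<Rightarrow> 'y \<Rightarrow> real) \<Rightarrow> ('x \<Rightarrow> 'y) set \<Rightarrow> ('x, 'y) alg \<Rightarrow> real" where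
  "costA cost H A = Max ((\<lambda>h. costS cost (final A h)) ` H)"

definition bifurcating :: "('x \<Rightarrow> 'y) set \<Rightarrow> ('x, 'y) alg \<Rightarrow> bool" where
  "bifurcating H A = (\<forall>t. \<forall>h\<in>H. \<forall>x. A (run A h t) = Some x \<longrightarrow>
        card (resp H x (run A h t)) \<ge> 2)"

definition consistency_aware :: "('x \<Rightarrow> 'y) set \<Rightarrow> (('x \<times> 'y) set \<Rightarrow> real) \<Rightarrow> real \<Rightarrow> bool" where
  "consistency_aware H f Q = (\<forall>S. vs H S = {} \<longrightarrow> f S \<ge> Q)"

definition monotone_fn :: "(('x \<times> 'y) set \<Rightarrow> real) \<Rightarrow> bool" where
  "monotone_fn f = (\<forall>A B. A \<subseteq> B \<longrightarrow> f A \<le> f B)"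

definition submodular :: "(('x \<times> 'y) set \<Rightarrow> real) \<Rightarrow> bool" where
  "submodular f = (\<forall>A B z. A \<subseteq> B \<longrightarrow> z \<notin> B \<longrightarrow>
        f (insert z A) - f A \<ge> f (insert z B) - f B)"

definition delta :: "(('x \<times> 'y) set \<Rightarrow> real) \<Rightarrow> ('x \<times> 'y) \<Rightarrow> ('x \<times> 'y) set \<Rightarrow> real" where
  "delta g z A = g (insert z A) - g A"

definition ufun :: "('x \<Rightarrow> 'y) set \<Rightarrow> ('x \<Rightarrow> 'y \<Rightarrow> real) \<Rightarrow> (('x \<times> 'y) set \<Rightarrow> real) \<Rightarrow> real
                    \<Rightarrow> 'x \<Rightarrow> ('x \<times> 'y) set \<Rightarrow> real" where
  "ufun H cost f Q x S = Min ((\<lambda>h. delta (\<lambda>T. min (f T) Q) (x, h x) S / cost x (h x)) ` vs H S)"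

definition Rcost :: "('x::finite \<Rightarrow> 'y::finite \<Rightarrow> real) \<Rightarrow> real" where
  "Rcost cost = Max ((\<lambda>x. Max (range (cost x)) / Min (range (cost x))) ` UNIV)"

definition phi :: "('x \<Rightarrow> 'y::finite \<Rightarrow> real) \<Rightarrow> 'x \<Rightarrow> real" where
  "phi cost x = sorted_list_of_multiset (image_mset (cost x) (mset_set UNIV)) ! 1"

definition rcost :: "('x::finite \<Rightarrow> 'y::finite \<Rightarrow> real) \<Rightarrow> real" where
  "rcost cost = Max ((\<lambda>(x,y). cost x y / phi cost x) ` UNIV)"

end

theory Submission
  imports Defs
begin


lemma run_step_mono: "run A h t \<subseteq> run A h (Suc t)"
  by (auto split: option.splits)

lemma run_mono: "s \<le> t \<Longrightarrow> run A h s \<subseteq> run A h t"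
  using lift_Suc_mono_le[of "run A h", OF run_step_mono] by blast

lemma run_pairs: "(a,b) \<in> run A g t \<Longrightarrow> b = g a"
  by (induction t) (auto split: option.splits)

lemma run_agree:
  assumes "\<forall>(a,b)\<in>run A g t. h a = b" "s \<le> t"
  shows "run A h s = run A g s"
  using assms(2)
proof (induction s)
  case 0 then show ?case by simp
next
  case (Suc s)
  then have IH: "run A h s = run A g s" by simp
  show ?case
  proof (cases "A (run A g s)")
    case None then show ?thesis using IH by simp
  next
    case (Some x)
    have "(x, g x) \<in> run A g (Suc s)" using Some by simp
    also have "\<dots> \<subseteq> run A g t" using Suc.prems run_mono by blast
    finally have "h x = g x" using assms(1) by auto
    then show ?thesis using IH Some by simp
  qed
qed

lemma final_eq:
  assumes "A (run A h t) = None" "\<forall>s<t. A (run A h s) \<noteq> None"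
  shows "final A h = run A h t"
proof -
  have "(LEAST t. A (run A h t) = None) = t"
    apply (rule Least_equality) using assms leI by blast+
  then show ?thesis unfolding final_def by simp
qed

lemma final_sup:
  assumes "terminates A h" "\<forall>s\<le>t. A (run A h s) \<noteq> None"
  shows "run A h (Suc t) \<subseteq> final A h"
proof -
  define L where "L = (LEAST t. A (run A h t) = None)"
  have "A (run A h L) = None" unfolding L_def using assms(1) unfolding terminates_def
    by (rule LeastI_ex)
  then have "Suc t \<le> L" using assms(2) by (meson not_less_eq_eq)
  then show ?thesis unfolding final_def L_def[symmetric] by (rule run_mono)
qed

lemma costS_mono:
  fixes B :: "('x::finite \<times> 'y::finite) set"
  assumes "S \<subseteq> B" "\<And>x y. cost x y > 0"
  shows "costS cost S \<le> costS cost B"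
  unfolding costS_def
  by (rule sum_mono2) (use assms in \<open>auto intro: less_imp_le\<close>)

lemma costS_insert:
  fixes S :: "('x::finite \<times> 'y::finite) set"
  assumes "z \<notin> S"
  shows "costS cost (insert z S) = cost (fst z) (snd z) + costS cost S"
  unfolding costS_def using assms by (simp add: case_prod_beta)

lemma costS_nonneg:
  fixes S :: "('x::finite \<times> 'y::finite) set"
  assumes "\<And>x y. cost x y > 0"
  shows "costS cost S \<ge> 0"
  unfolding costS_def by (rule sum_nonneg) (use assms in \<open>auto intro: less_imp_le\<close>)

lemma sub_sum:
  assumes "finite T" and nn: "\<And>S. f S \<ge> 0" and sm: "submodular f" and fe: "f {} = 0" and Q: "Q \<ge> 0"
  shows "min (f T) Q \<le> (\<Sum>z\<in>T. min (f {z}) Q)"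
  using assms(1)
proof (induction T rule: finite_induct)
  case empty then show ?case using fe nn[of "{}"] by simp
next
  case (insert z T)
  have "f (insert z T) - f T \<le> f (insert z {}) - f {}"
    using sm insert(2) unfolding submodular_def by blast
  then have "f (insert z T) \<le> f T + f {z}" using fe by simp
  then have "min (f (insert z T)) Q \<le> min (f T) Q + min (f {z}) Q"
    using nn[of T] nn[of "{z}"] Q by linarith
  then show ?case using insert by simp
qed

lemma phi_props:
  fixes cost :: "'x \<Rightarrow> 'y::finite \<Rightarrow> real"
  assumes "y1 \<noteq> y2"
  shows "phi cost x \<le> max (cost x y1) (cost x y2) \<and> phi cost x \<in> range (cost x)"
proof -
  define M where "M = image_mset (cost x) (mset_set (UNIV::'y set))"
  define L where "L = sorted_list_of_multiset M"
  have mL: "mset L = M" unfolding L_def by simp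
  have sL: "sorted L" unfolding L_def by simp
  have sub0: "{#y1, y2#} \<subseteq># mset_set (UNIV::'y set)"
    unfolding subseteq_mset_def using assms by (auto simp: count_mset_set')
  have sub: "{#cost x y1, cost x y2#} \<subseteq># mset L"
    using image_mset_subseteq_mono[OF sub0, of "cost x"] mL M_def by simp
  have len: "length L \<ge> 2" using size_mset_mono[OF sub] by (metis size_mset size_add_mset size_empty one_add_one add_Suc_right numeral_2_eq_2 Suc_1)
  then obtain a b rest where Lab: "L = a # b # rest"
    by (metis One_nat_def Suc_1 Suc_le_length_iff)
  have ph: "phi cost x = b" unfolding phi_def M_def[symmetric] L_def[symmetric] Lab by simp
  have "b \<in> set L" using Lab by simp
  then have r: "b \<in> range (cost x)" using mL M_def by (metis set_mset_mset set_image_mset finite_set_mset_mset_set finite)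
  have "b \<le> max (cost x y1) (cost x y2)"
  proof (rule ccontr)
    assume nb: "\<not> ?thesis"
    have big: "\<forall>v\<in>set (b # rest). v > max (cost x y1) (cost x y2)"
      using sL nb Lab by auto
    have "cost x y1 \<in># mset L" "cost x y2 \<in># mset L" using sub by (auto dest: mset_subset_eqD)
    then have "cost x y1 = a" "cost x y2 = a" using big Lab by auto
    then have "count (mset L) a \<ge> 2" using sub \<open>cost x y1 = a\<close> \<open>cost x y2 = a\<close> by (metis mset_subset_eq_count count_add_mset count_single count_empty one_add_one add_Suc_right numeral_2_eq_2 Suc_1)
    moreover have "count (mset L) a = 1" proof -
      have "a \<notin> set (b # rest)" using big \<open>cost x y1 = a\<close> by force
      then show ?thesis using Lab by (auto simp: count_eq_zero_iff)
    qed
    ultimately show False by simp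
  qed
  then show ?thesis using ph r by simp
qed

lemma vs_agree: "h \<in> vs H R \<Longrightarrow> \<forall>(a,b)\<in>R. h a = b"
  unfolding vs_def by auto

lemma contra:
  fixes T :: "('x::finite \<times> 'y::finite) set"
  assumes fT: "f T \<ge> Q" and Qp: "Q > 0" and fe: "f {} = 0"
    and nn: "\<And>S. f S \<ge> 0" and sm: "submodular f"
    and pairs: "\<forall>(a,b)\<in>T. b = g a" and cT: "costS cost T \<le> K" and Kp: "K > 0"
    and cp: "\<And>x y. cost x y > 0"
    and key: "\<forall>x. min (f {(x, g x)}) Q / cost x (g x) < Q / K"
  shows False
proof -
  have ne: "T \<noteq> {}" using fT fe Qp by auto
  have "Q \<le> (\<Sum>z\<in>T. min (f {z}) Q)"
    using sub_sum[of T f Q] nn sm fe Qp fT by force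
  also have "\<dots> < (\<Sum>z\<in>T. Q / K * cost (fst z) (snd z))"
  proof (rule sum_strict_mono[OF finite ne])
    fix z assume "z \<in> T"
    then obtain a where z: "z = (a, g a)" using pairs by (cases z) auto
    have "min (f {(a, g a)}) Q / cost a (g a) < Q / K" using key by blast
    then show "min (f {z}) Q < Q / K * cost (fst z) (snd z)"
      using cp[of a "g a"] z by (simp add: divide_less_eq)
  qed
  also have "\<dots> = Q / K * costS cost T"
    unfolding costS_def by (simp add: sum_distrib_left case_prod_beta)
  also have "\<dots> \<le> Q / K * K" using cT Qp Kp by (intro mult_left_mono) auto
  also have "\<dots> = Q" using Kp by simp
  finally show False by simp
qed

theorem lemma2:
  fixes H :: "('x::finite \<Rightarrow> 'y::finite) set"
    and cost :: "'x \<Rightarrow> 'y \<Rightarrow> real"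
    and f :: "('x \<times> 'y) set \<Rightarrow> real"
    and Q \<eta> :: real
    and A :: "('x, 'y) alg"
  assumes H_ne: "H \<noteq> {}"
    and cost_pos: "\<And>x y. cost x y > 0"
    and f_nonneg: "\<And>S. f S \<ge> 0"
    and Q_pos: "Q > 0" and eta_pos: "\<eta> > 0"
    and mono: "monotone_fn f" and submod: "submodular f" and f_empty: "f {} = 0"
    and gap: "\<And>S. f S \<ge> Q - \<eta> \<Longrightarrow> f S \<ge> Q"
    and cons: "consistency_aware H f Q"
    and terminates_all: "\<forall>h\<in>H. terminates A h"
    and achieves: "\<forall>h\<in>H. f (final A h) \<ge> Q"
  shows "\<exists>x. ufun H cost f Q x {} \<ge>
           Q / ((if bifurcating H A then rcost cost else Rcost cost) * costA cost H A)"
proof (rule ccontr)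
  define \<gamma> where "\<gamma> = (if bifurcating H A then rcost cost else Rcost cost)"
  define C where "C = costA cost H A"
  assume "\<not> ?thesis"
  hence bad: "\<forall>x. ufun H cost f Q x {} < Q / (\<gamma> * C)"
    unfolding \<gamma>_def C_def by (auto simp: not_le)
  have finH: "finite H" by (rule finite_subset[OF subset_UNIV finite_UNIV])
  have vs0: "vs H {} = H" unfolding vs_def by simp
  have "\<forall>x. \<exists>h\<in>H. min (f {(x, h x)}) Q / cost x (h x) < Q / (\<gamma> * C)"
  proof
    fix x
    have "ufun H cost f Q x {} < Q / (\<gamma> * C)" using bad by blast
    then show "\<exists>h\<in>H. min (f {(x, h x)}) Q / cost x (h x) < Q / (\<gamma> * C)"
      unfolding ufun_def delta_def vs0 using H_ne finH f_empty Q_pos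
      by (simp add: Min_less_iff)
  qed
  then obtain hx where hx: "\<forall>x. hx x \<in> H \<and> min (f {(x, hx x x)}) Q / cost x (hx x x) < Q / (\<gamma> * C)"
    by metis
  define g where "g x = hx x x" for x
  have key: "\<forall>x. min (f {(x, g x)}) Q / cost x (g x) < Q / (\<gamma> * C)"
    using hx g_def by simp
  have CH: "\<And>h. h \<in> H \<Longrightarrow> costS cost (final A h) \<le> C"
    unfolding C_def costA_def using finH by (intro Max_ge) auto
  obtain x0 where x0: "A {} = Some x0"
  proof (cases "A {}")
    case None
    obtain h where h: "h \<in> H" using H_ne by blast
    have "final A h = {}" using final_eq[of A h 0] None by simp
    then show ?thesis using achieves h f_empty Q_pos by auto
  next
    case (Some x) then show ?thesis using that by blast
  qed
  have R1: "Rcost cost \<ge> 1"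
  proof -
    have fin: "finite (range (cost x0))" by simp
    have "Max (range (cost x0)) \<ge> Min (range (cost x0))"
      using fin by (meson Min_le Max_ge rangeI order.trans)
    moreover have "Min (range (cost x0)) > 0" using fin cost_pos by (subst Min_gr_iff) auto
    ultimately have "Max (range (cost x0)) / Min (range (cost x0)) \<ge> 1" by simp
    also have "\<dots> \<le> Rcost cost" unfolding Rcost_def by (intro Max_ge) auto
    finally show ?thesis .
  qed
  have Rle: "\<And>x y y'. cost x y \<le> Rcost cost * cost x y'"
  proof -
    fix x y y'
    have fin: "finite (range (cost x))" by simp
    have mx: "cost x y \<le> Max (range (cost x))" using fin by auto
    have mn: "Min (range (cost x)) \<le> cost x y'" using fin by auto
    have mp: "Min (range (cost x)) > 0" using fin cost_pos by (subst Min_gr_iff) auto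
    have le: "Max (range (cost x)) / Min (range (cost x)) \<le> Rcost cost"
      unfolding Rcost_def by (intro Max_ge) auto
    have "cost x y \<le> Max (range (cost x)) / Min (range (cost x)) * Min (range (cost x))"
      using mx mp by (simp add: less_imp_neq[symmetric])
    also have "\<dots> \<le> Rcost cost * Min (range (cost x))" by (rule mult_right_mono[OF le less_imp_le[OF mp]])
    also have "\<dots> \<le> Rcost cost * cost x y'" using mn R1 by (intro mult_left_mono) auto
    finally show "cost x y \<le> Rcost cost * cost x y'" .
  qed
  have rle: "\<And>x y. cost x y / phi cost x \<le> rcost cost"
    unfolding rcost_def by (intro Max_ge) auto
  have bif_resp: "\<exists>y'\<in>resp H x S. cost x z \<le> rcost cost * cost x y'"
    if "card (resp H x S) \<ge> 2" for x S z
  proof -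
    have finr: "finite (resp H x S)" by simp
    have rne: "resp H x S \<noteq> {}" using that by auto
    define m where "m = Max (cost x ` resp H x S)"
    have "m \<in> cost x ` resp H x S" unfolding m_def using finr rne by (intro Max_in) auto
    then obtain y' where y'1: "y' \<in> resp H x S" and my: "m = cost x y'" by blast
    have y'2: "\<forall>y\<in>resp H x S. cost x y \<le> cost x y'"
    proof
      fix y assume yr: "y \<in> resp H x S"
      show "cost x y \<le> cost x y'"
        using Max_ge[OF finite_imageI[OF finr, of "cost x"] imageI[OF yr, of "cost x"]] my unfolding m_def by simp
    qed
    note y' = y'1 y'2
    have "\<not> card (resp H x S) \<le> Suc 0" using that by simp
    then obtain y1 y2 where yy: "y1 \<in> resp H x S" "y2 \<in> resp H x S" "y1 \<noteq> y2"
      using card_le_Suc0_iff_eq[OF finr] by blast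
    have ph: "phi cost x \<le> max (cost x y1) (cost x y2)" "phi cost x \<in> range (cost x)"
      using phi_props[OF yy(3), of cost x] by blast+
    have php: "phi cost x > 0" using ph(2) cost_pos by auto
    have pc: "phi cost x \<le> cost x y'" 
    proof -
      have "cost x y1 \<le> cost x y'" "cost x y2 \<le> cost x y'" using y'(2) yy(1,2) by blast+
      then show ?thesis using ph(1) by (simp add: max_def split: if_splits)
    qed
    have "cost x z \<le> rcost cost * phi cost x" using rle[of x z] php
      by (simp add: divide_le_eq mult.commute)
    moreover have r0: "rcost cost \<ge> 0"
      using rle[of x z] php cost_pos[of x z] divide_pos_pos[of "cost x z" "phi cost x"] by linarith
    ultimately have "cost x z \<le> rcost cost * cost x y'"
      using mult_left_mono[OF pc r0] by linarith
    then show ?thesis using y' by blast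
  qed
  have g1: "\<gamma> \<ge> 1"
  proof (cases "bifurcating H A")
    case False then show ?thesis using R1 \<gamma>_def by simp
  next
    case True
    obtain h where h: "h \<in> H" using H_ne by blast
    have "card (resp H x0 (run A h 0)) \<ge> 2" 
    proof -
      have "A (run A h 0) = Some x0" using x0 by simp
      then show ?thesis using True h unfolding bifurcating_def by blast
    qed
    then have bb: "2 \<le> card (resp H x0 {})" by simp
    have "Max (range (cost x0)) \<in> range (cost x0)" by (rule Max_in) auto
    then obtain z where z: "cost x0 z = Max (range (cost x0))" by (metis rangeE)
    obtain y' where y'z: "cost x0 z \<le> rcost cost * cost x0 y'" using bif_resp[OF bb, of z] by blast
    have zy: "cost x0 y' \<le> cost x0 z" unfolding z by (rule Max_ge) auto
    have "rcost cost \<ge> 1"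
    proof (rule ccontr)
      assume "\<not> rcost cost \<ge> 1"
      then have "rcost cost * cost x0 y' < 1 * cost x0 y'"
        by (intro mult_strict_right_mono) (use cost_pos in auto)
      then show False using y'z zy by linarith
    qed
    then show ?thesis using True \<gamma>_def by simp
  qed
  define tt where "tt h = (LEAST t. A (run A h t) = None)" for h
  define M where "M = Max (tt ` H)"
  have ttM: "\<And>h. h \<in> H \<Longrightarrow> A (run A h (tt h)) = None \<and> tt h \<le> M"
  proof -
    fix h assume h: "h \<in> H"
    have "A (run A h (tt h)) = None" unfolding tt_def
      using terminates_all h unfolding terminates_def by (metis (mono_tags, lifting) LeastI_ex)
    moreover have "tt h \<le> M" unfolding M_def by (rule Max_ge) (use finH h in auto)
    ultimately show "A (run A h (tt h)) = None \<and> tt h \<le> M" by blast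
  qed
  define P where "P t = (A (run A g t) = None \<or>
      (\<exists>x. A (run A g t) = Some x \<and> vs H (insert (x, g x) (run A g t)) = {}))" for t
  have agree: "\<And>h t s. h \<in> vs H (run A g t) \<Longrightarrow> s \<le> t \<Longrightarrow> run A h s = run A g s"
    by (rule run_agree[OF vs_agree])
  have exP: "\<exists>t. P t"
  proof (rule ccontr)
    assume nP: "\<not> (\<exists>t. P t)"
    have "vs H (run A g t) \<noteq> {}" for t
    proof (cases t)
      case 0 then show ?thesis using vs0 H_ne by simp
    next
      case (Suc s)
      have "\<not> P s" using nP by blast
      then obtain x where "A (run A g s) = Some x" "vs H (insert (x, g x) (run A g s)) \<noteq> {}"
        unfolding P_def by auto
      then show ?thesis using Suc by simp
    qed
    then obtain h where h: "h \<in> vs H (run A g M)" by blast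
    then have hH: "h \<in> H" unfolding vs_def by simp
    have "run A h (tt h) = run A g (tt h)" using agree[OF h] ttM[OF hH] by blast
    then have "P (tt h)" using ttM[OF hH] unfolding P_def by simp
    then show False using nP by blast
  qed
  define t0 where "t0 = (LEAST t. P t)"
  define S where "S = run A g t0"
  have Pt0: "P t0" unfolding t0_def using exP by (rule LeastI_ex)
  have nPs: "\<And>s. s < t0 \<Longrightarrow> \<not> P s" unfolding t0_def by (rule not_less_Least)
  have notNone: "\<And>s. s < t0 \<Longrightarrow> A (run A g s) \<noteq> None" using nPs unfolding P_def by auto
  have vsS: "vs H S \<noteq> {}"
  proof (cases t0)
    case 0 then show ?thesis using vs0 H_ne S_def by simp
  next
    case (Suc s)
    have "\<not> P s" using nPs Suc by simp
    then obtain x where "A (run A g s) = Some x" "vs H (insert (x, g x) (run A g s)) \<noteq> {}"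
      unfolding P_def by auto
    then show ?thesis using Suc S_def by simp
  qed
  have pairsS: "\<forall>(a,b)\<in>S. b = g a" unfolding S_def using run_pairs by fast
  have gC: "\<gamma> * C > 0 \<and> (\<exists>T. f T \<ge> Q \<and> (\<forall>(a,b)\<in>T. b = g a) \<and> costS cost T \<le> \<gamma> * C)"
  proof (cases "A S")
    case None
    obtain h where h: "h \<in> vs H S" using vsS by blast
    then have hH: "h \<in> H" unfolding vs_def by simp
    have ag: "\<And>s. s \<le> t0 \<Longrightarrow> run A h s = run A g s" using agree h S_def by blast
    have "final A h = run A h t0"
      by (rule final_eq) (use ag None notNone S_def in auto)
    then have fS: "final A h = S" using ag S_def by simp
    then have fQ: "f S \<ge> Q" using achieves hH by auto
    have cS: "costS cost S \<le> C" using CH[OF hH] fS by simp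
    have "S \<noteq> {}" using fQ f_empty Q_pos by auto
    then have "costS cost S > 0" unfolding costS_def using cost_pos
      by (intro sum_pos) auto
    then have C0: "C > 0" using cS by simp
    have "costS cost S \<le> \<gamma> * C" using cS mult_right_mono[OF g1 less_imp_le[OF C0]]
      by linarith
    then show ?thesis using C0 g1 fQ pairsS by (intro conjI exI[of _ S]) auto
  next
    case (Some x)
    have vse: "vs H (insert (x, g x) S) = {}" using Pt0 Some unfolding P_def S_def by auto
    have fQ: "f (insert (x, g x) S) \<ge> Q" using cons vse unfolding consistency_aware_def by blast
    have nin: "(x, g x) \<notin> S" using vse vsS by (metis insert_absorb)
    obtain y' where y': "y' \<in> resp H x S" "cost x (g x) \<le> \<gamma> * cost x y'"
    proof (cases "bifurcating H A")
      case False
      obtain h where "h \<in> vs H S" using vsS by blast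
      then have "h x \<in> resp H x S" unfolding resp_def by blast
      then show ?thesis using that Rle False \<gamma>_def by auto
    next
      case True
      obtain h where h: "h \<in> vs H S" using vsS by blast
      then have hH: "h \<in> H" unfolding vs_def by simp
      have "run A h t0 = S" using agree[of h t0 t0] h S_def by simp
      then have "card (resp H x S) \<ge> 2" using True hH Some unfolding bifurcating_def by metis
      then show ?thesis using bif_resp that True \<gamma>_def by auto
    qed
    obtain h where h: "h \<in> vs H S" and hxy: "h x = y'" using y'(1) unfolding resp_def by blast
    then have hH: "h \<in> H" unfolding vs_def by simp
    have ag: "\<And>s. s \<le> t0 \<Longrightarrow> run A h s = run A g s" using agree h S_def by blast
    have nn0: "\<forall>s\<le>t0. A (run A h s) \<noteq> None"
    proof (intro allI impI)
      fix s assume "s \<le> t0"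
      then have "run A h s = run A g s" using ag by blast
      then show "A (run A h s) \<noteq> None"
        using notNone[of s] Some S_def \<open>s \<le> t0\<close> by (cases "s = t0") auto
    qed
    have "run A h (Suc t0) \<subseteq> final A h"
      by (rule final_sup) (use terminates_all hH nn0 in auto)
    moreover have "run A h (Suc t0) = insert (x, y') S" using ag[of t0] Some S_def hxy by simp
    ultimately have "costS cost (insert (x, y') S) \<le> C"
      using CH[OF hH] costS_mono[of _ _ cost, OF _ cost_pos] by (metis order.trans)
    moreover have nin': "(x, y') \<notin> S" using nin pairsS by auto
    ultimately have c1: "cost x y' + costS cost S \<le> C" using costS_insert by (metis fst_conv snd_conv)
    have cS0: "costS cost S \<ge> 0" using costS_nonneg cost_pos by blast
    have C0: "C > 0" using c1 cS0 cost_pos[of x y'] by linarith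
    have "costS cost (insert (x, g x) S) = cost x (g x) + costS cost S"
      using costS_insert[OF nin] by simp
    also have "\<dots> \<le> \<gamma> * cost x y' + \<gamma> * costS cost S"
      using y'(2) mult_right_mono[OF g1 cS0] by linarith
    also have "\<dots> \<le> \<gamma> * C" using mult_left_mono[OF c1, of \<gamma>] g1 by (simp add: distrib_left)
    finally have "costS cost (insert (x, g x) S) \<le> \<gamma> * C" .
    moreover have "\<forall>(a,b)\<in>insert (x, g x) S. b = g a" using pairsS by auto
    ultimately show ?thesis using fQ C0 g1 by (intro conjI exI[of _ "insert (x, g x) S"]) auto
  qed
  then obtain T where "f T \<ge> Q" "\<forall>(a,b)\<in>T. b = g a" "costS cost T \<le> \<gamma> * C" by blast
  then show False using contra[where f=f and T=T and Q=Q and g=g and cost=cost and K="\<gamma> * C"] gC key Q_pos f_empty f_nonneg submod cost_pos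
    by blast
qed

end
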